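(* Let $K$ be a field, $X=\{x_1,\dots,x_n\}$, $H=\langle h_1,\dots,h_r\rangle\subseteq K[X]$, $f\in K[X]$, let $Y=\{x_1,\dots,x_d\}$ be a maximum-size set of independent variables for $H$, let $Z=\{x_{d+1},\dots,x_n\}$ and $H'=HK(Y)[Z]$. Then $f\in\sqrt{H'}$ if and only if $\langle h_1,\dots,h_r,f\cdot t-1\rangle K[Y,Z,t]\cap K[Y]\neq\langle 0\rangle$, where $t$ is a new variable.
   Context: A set $Y=\{x_1,\dots,x_d\}\subseteq X$ is a maximum-size set of independent variables for $H$ if $H\cap K[Y]=\langle 0\rangle$ and for every subset $W\subseteq X$ with more than $d$ elements $H\cap K[W]\neq\langle 0\rangle$. $K(Y)$ is the field of rational functions in $x_1,\dots,x_d$ and $\sqrt{H'}$ is the radical of $H'$ in $K(Y)[Z]$. *)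

theory Defs
  imports "HOL-Library.Poly_Mapping" "HOL-Computational_Algebra.Fraction_Field"
begin

text \<open>Multivariate polynomials over coefficients 'a in the variables x_0, x_1, ... (indexed by nat):
  finitely supported maps from monomials (exponent vectors) to coefficients.\<close>
type_synonym 'a mpoly = "(nat \<Rightarrow>\<^sub>0 nat) \<Rightarrow>\<^sub>0 'a"

definition PolyIn :: "nat set \<Rightarrow> ('a::zero) mpoly set" where
  "PolyIn V = {p. \<forall>m \<in> Poly_Mapping.keys p. Poly_Mapping.keys m \<subseteq> V}"

definition Var :: "nat \<Rightarrow> ('a::{zero,one}) mpoly" where
  "Var i = Poly_Mapping.single (Poly_Mapping.single i 1) 1"

definition gen_ideal :: "'r::comm_ring_1 set \<Rightarrow> 'r set \<Rightarrow> 'r set" where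
  "gen_ideal R G = {x. \<exists>(I::nat set) c g. finite I \<and> (\<forall>i\<in>I. c i \<in> R \<and> g i \<in> G)
                        \<and> x = (\<Sum>i\<in>I. c i * g i)}"

definition radical_in :: "'r::comm_ring_1 set \<Rightarrow> 'r set \<Rightarrow> 'r set" where
  "radical_in R J = {x \<in> R. \<exists>k::nat. x ^ k \<in> J}"

definition mon_lo :: "nat \<Rightarrow> (nat \<Rightarrow>\<^sub>0 nat) \<Rightarrow> (nat \<Rightarrow>\<^sub>0 nat)" where
  "mon_lo d m = Poly_Mapping.mapp (\<lambda>v c. if v < d then c else 0) m"
definition mon_hi :: "nat \<Rightarrow> (nat \<Rightarrow>\<^sub>0 nat) \<Rightarrow> (nat \<Rightarrow>\<^sub>0 nat)" where
  "mon_hi d m = Poly_Mapping.mapp (\<lambda>v c. if d \<le> v then c else 0) m"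

text \<open>The natural embedding K[X] to K(Y)[Z], Y = {x_i. i < d}, Z = the other variables:
  elements of K(Y)[Z] are polynomials (in all variables, only those in Z used) with coefficients
  in the fraction field of K[Y] (represented as the fraction field of the polynomial ring).\<close>
definition emb :: "nat \<Rightarrow> ('a::idom) mpoly \<Rightarrow> ('a mpoly fract) mpoly" where
  "emb d p = (\<Sum>m \<in> Poly_Mapping.keys p.
      Poly_Mapping.single (mon_hi d m)
        (Fract (Poly_Mapping.single (mon_lo d m) (Poly_Mapping.lookup p m)) 1))"

end

theory Submission
  imports Defs
begin

lemma pm_expand: "(p::'k \<Rightarrow>\<^sub>0 'b::comm_monoid_add) = (\<Sum>m\<in>Poly_Mapping.keys p. Poly_Mapping.single m (Poly_Mapping.lookup p m))"
proof (rule poly_mapping_eqI)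
  fix k
  show "Poly_Mapping.lookup p k = Poly_Mapping.lookup (\<Sum>m\<in>Poly_Mapping.keys p. Poly_Mapping.single m (Poly_Mapping.lookup p m)) k"
    by (simp add: lookup_sum lookup_single when_def in_keys_iff)
qed

definition rhom :: "('a::comm_ring_1 \<Rightarrow> 'b::comm_ring_1) \<Rightarrow> bool" where
  "rhom \<phi> \<longleftrightarrow> (\<forall>x y. \<phi> (x + y) = \<phi> x + \<phi> y) \<and> (\<forall>x y. \<phi> (x * y) = \<phi> x * \<phi> y) \<and> \<phi> 1 = 1"

lemma rhom_add: "rhom \<phi> \<Longrightarrow> \<phi> (x + y) = \<phi> x + \<phi> y" by (simp add: rhom_def)
lemma rhom_mult: "rhom \<phi> \<Longrightarrow> \<phi> (x * y) = \<phi> x * \<phi> y" by (simp add: rhom_def)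
lemma rhom_one: "rhom \<phi> \<Longrightarrow> \<phi> 1 = 1" by (simp add: rhom_def)
lemma rhom_zero: "rhom \<phi> \<Longrightarrow> \<phi> 0 = 0"
  using rhom_add[of \<phi> 0 0] by simp
lemma rhom_uminus: "rhom \<phi> \<Longrightarrow> \<phi> (- x) = - \<phi> x"
  using rhom_add[of \<phi> x "-x"] rhom_zero[of \<phi>] by (simp add: eq_neg_iff_add_eq_0 add.commute)
lemma rhom_diff: "rhom \<phi> \<Longrightarrow> \<phi> (x - y) = \<phi> x - \<phi> y"
  using rhom_add[of \<phi> x "-y"] rhom_uminus[of \<phi> y] by simp
lemma rhom_sum: "rhom \<phi> \<Longrightarrow> \<phi> (sum f A) = (\<Sum>a\<in>A. \<phi> (f a))"
  by (induction A rule: infinite_finite_induct) (auto simp: rhom_zero rhom_add)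
lemma rhom_prod: "rhom \<phi> \<Longrightarrow> \<phi> (prod f A) = (\<Prod>a\<in>A. \<phi> (f a))"
  by (induction A rule: infinite_finite_induct) (auto simp: rhom_one rhom_mult)
lemma rhom_power: "rhom \<phi> \<Longrightarrow> \<phi> (x ^ k) = \<phi> x ^ k"
  by (induction k) (auto simp: rhom_one rhom_mult)
lemma rhom_comp: "rhom \<phi> \<Longrightarrow> rhom \<psi> \<Longrightarrow> rhom (\<phi> \<circ> \<psi>)"
  by (simp add: rhom_def)

definition monev :: "(nat \<Rightarrow> 'b::comm_ring_1) \<Rightarrow> (nat \<Rightarrow>\<^sub>0 nat) \<Rightarrow> 'b" where
  "monev \<sigma> m = (\<Prod>v\<in>Poly_Mapping.keys m. \<sigma> v ^ Poly_Mapping.lookup m v)"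

lemma monev_superset: "finite A \<Longrightarrow> Poly_Mapping.keys m \<subseteq> A \<Longrightarrow>
   monev \<sigma> m = (\<Prod>v\<in>A. \<sigma> v ^ Poly_Mapping.lookup m v)"
  unfolding monev_def by (rule prod.mono_neutral_left) (auto simp: in_keys_iff)

lemma monev_add: "monev \<sigma> (m + m') = monev \<sigma> m * monev \<sigma> m'"
proof -
  let ?A = "Poly_Mapping.keys m \<union> Poly_Mapping.keys m'"
  have "Poly_Mapping.keys (m + m') \<subseteq> ?A" by (rule keys_add)
  then show ?thesis
    by (simp add: monev_superset[of ?A] lookup_add power_add prod.distrib)
qed

lemma monev_zero[simp]: "monev \<sigma> 0 = 1" by (simp add: monev_def)

lemma monev_single: "monev \<sigma> (Poly_Mapping.single v k) = \<sigma> v ^ k"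
  by (simp add: monev_superset[of "{v}"])

lemma monev_cong: "(\<And>v. v \<in> Poly_Mapping.keys m \<Longrightarrow> \<sigma> v = \<sigma>' v) \<Longrightarrow> monev \<sigma> m = monev \<sigma>' m"
  unfolding monev_def by (rule prod.cong) auto

definition ev :: "('a::comm_ring_1 \<Rightarrow> 'b::comm_ring_1) \<Rightarrow> (nat \<Rightarrow> 'b) \<Rightarrow> 'a mpoly \<Rightarrow> 'b" where
  "ev c \<sigma> p = (\<Sum>m\<in>Poly_Mapping.keys p. c (Poly_Mapping.lookup p m) * monev \<sigma> m)"

lemma ev_superset: "rhom c \<Longrightarrow> finite A \<Longrightarrow> Poly_Mapping.keys p \<subseteq> A \<Longrightarrow>
   ev c \<sigma> p = (\<Sum>m\<in>A. c (Poly_Mapping.lookup p m) * monev \<sigma> m)"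
  unfolding ev_def by (rule sum.mono_neutral_left) (auto simp: in_keys_iff rhom_zero)

lemma ev_add: "rhom c \<Longrightarrow> ev c \<sigma> (p + q) = ev c \<sigma> p + ev c \<sigma> q"
proof -
  assume c: "rhom c"
  let ?A = "Poly_Mapping.keys p \<union> Poly_Mapping.keys q"
  have "Poly_Mapping.keys (p + q) \<subseteq> ?A" by (rule keys_add)
  then show ?thesis using c
    by (simp add: ev_superset[of c ?A] lookup_add rhom_add distrib_right sum.distrib)
qed

lemma ev_zero: "ev c \<sigma> 0 = 0" by (simp add: ev_def)

lemma ev_sum: "rhom c \<Longrightarrow> ev c \<sigma> (sum f A) = (\<Sum>a\<in>A. ev c \<sigma> (f a))"
  by (induction A rule: infinite_finite_induct) (auto simp: ev_zero ev_add)

lemma ev_single: "rhom c \<Longrightarrow> ev c \<sigma> (Poly_Mapping.single m a) = c a * monev \<sigma> m"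
  by (simp add: ev_superset[of c "{m}"])

lemma ev_expand: "rhom c \<Longrightarrow> ev c \<sigma> p = (\<Sum>m\<in>Poly_Mapping.keys p. ev c \<sigma> (Poly_Mapping.single m (Poly_Mapping.lookup p m)))"
proof -
  assume c: "rhom c"
  show ?thesis unfolding ev_def[of c \<sigma> p] by (rule sum.cong) (simp_all only: ev_single[OF c])
qed

lemma mult_expand: "(p::'k::comm_monoid_add \<Rightarrow>\<^sub>0 'b::comm_semiring_0) * q =
  (\<Sum>m\<in>Poly_Mapping.keys p. \<Sum>m'\<in>Poly_Mapping.keys q. Poly_Mapping.single (m + m') (Poly_Mapping.lookup p m * Poly_Mapping.lookup q m'))"
proof -
  have "p * q = (\<Sum>m\<in>Poly_Mapping.keys p. Poly_Mapping.single m (Poly_Mapping.lookup p m)) * (\<Sum>m'\<in>Poly_Mapping.keys q. Poly_Mapping.single m' (Poly_Mapping.lookup q m'))"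
    using pm_expand[of p] pm_expand[of q] by simp
  also have "\<dots> = (\<Sum>m\<in>Poly_Mapping.keys p. \<Sum>m'\<in>Poly_Mapping.keys q. Poly_Mapping.single m (Poly_Mapping.lookup p m) * Poly_Mapping.single m' (Poly_Mapping.lookup q m'))"
    by (simp add: sum_product)
  finally show ?thesis by (simp add: mult_single)
qed

lemma ev_mult: "rhom c \<Longrightarrow> ev c \<sigma> (p * q) = ev c \<sigma> p * ev c \<sigma> q"
proof -
  assume c: "rhom c"
  have "ev c \<sigma> (p * q) = (\<Sum>m\<in>Poly_Mapping.keys p. \<Sum>m'\<in>Poly_Mapping.keys q.
      c (Poly_Mapping.lookup p m) * monev \<sigma> m * (c (Poly_Mapping.lookup q m') * monev \<sigma> m'))"
    by (simp add: mult_expand[of p q] ev_sum c ev_single rhom_mult monev_add mult_ac)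
  also have "\<dots> = ev c \<sigma> p * ev c \<sigma> q"
    by (simp add: ev_def sum_product)
  finally show ?thesis .
qed

lemma ev_one: "rhom c \<Longrightarrow> ev c \<sigma> 1 = 1"
  using ev_single[of c \<sigma> 0 1] by (simp add: rhom_one)

lemma rhom_ev: "rhom c \<Longrightarrow> rhom (ev c \<sigma>)"
  by (simp add: rhom_def ev_add ev_mult ev_one)

lemma ev_Var: "rhom c \<Longrightarrow> ev c \<sigma> (Var i) = \<sigma> i"
  by (simp add: Var_def ev_single rhom_one monev_single)

lemma ev_const: "rhom c \<Longrightarrow> ev c \<sigma> (Poly_Mapping.single 0 a) = c a"
  by (simp add: ev_single)

lemma ev_comp: "rhom c \<Longrightarrow> rhom \<phi> \<Longrightarrow> \<phi> (ev c \<sigma> p) = ev (\<phi> \<circ> c) (\<phi> \<circ> \<sigma>) p"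
  by (simp add: ev_def monev_def rhom_sum rhom_mult rhom_prod rhom_power)

lemma ev_cong: "(\<And>m v. m \<in> Poly_Mapping.keys p \<Longrightarrow> v \<in> Poly_Mapping.keys m \<Longrightarrow> \<sigma> v = \<sigma>' v) \<Longrightarrow>
   ev c \<sigma> p = ev c \<sigma>' p"
  unfolding ev_def by (rule sum.cong) (auto intro!: arg_cong[where f="(*) _"] monev_cong)

lemma ev_closed:
  assumes "\<And>x y. x \<in> S \<Longrightarrow> y \<in> S \<Longrightarrow> x + y \<in> S" "\<And>x y. x \<in> S \<Longrightarrow> y \<in> S \<Longrightarrow> x * y \<in> S"
    "0 \<in> S" "1 \<in> S"
    "\<And>m. m \<in> Poly_Mapping.keys p \<Longrightarrow> c (Poly_Mapping.lookup p m) \<in> S"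
    "\<And>m v. m \<in> Poly_Mapping.keys p \<Longrightarrow> v \<in> Poly_Mapping.keys m \<Longrightarrow> \<sigma> v \<in> S"
  shows "ev c \<sigma> p \<in> S"
proof -
  have sumc: "(\<And>a. a \<in> A \<Longrightarrow> f a \<in> S) \<Longrightarrow> sum f A \<in> S" for f and A :: "'c set"
    by (induction A rule: infinite_finite_induct) (auto simp: assms)
  have prodc: "(\<And>a. a \<in> A \<Longrightarrow> f a \<in> S) \<Longrightarrow> prod f A \<in> S" for f and A :: "'c set"
    by (induction A rule: infinite_finite_induct) (auto simp: assms)
  have powc: "x \<in> S \<Longrightarrow> x ^ k \<in> S" for x k
    by (induction k) (auto simp: assms)
  show ?thesis unfolding ev_def monev_def
    by (intro sumc assms(2) prodc powc assms(5,6))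
qed

lemma single_power: "Poly_Mapping.single k (a::'b::comm_semiring_1) ^ n = Poly_Mapping.single (\<Sum>i<n. k) (a ^ n)"
  by (induction n) (auto simp: mult_single add.commute mult.commute)

lemma Var_power: "(Var v :: 'a::comm_ring_1 mpoly) ^ n = Poly_Mapping.single (Poly_Mapping.single v n) 1"
proof -
  have "(\<Sum>i<n. Poly_Mapping.single v (1::nat)) = Poly_Mapping.single v n"
    by (induction n) (simp_all del: sum_constant add: single_add[symmetric])
  then show ?thesis by (simp add: Var_def single_power)
qed

lemma monev_Var: "monev (Var :: nat \<Rightarrow> 'a::comm_ring_1 mpoly) m = Poly_Mapping.single m 1"
proof -
  have "(\<Prod>v\<in>A. Poly_Mapping.single (Poly_Mapping.single v (Poly_Mapping.lookup m v)) (1::'a)) =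
     Poly_Mapping.single (\<Sum>v\<in>A. Poly_Mapping.single v (Poly_Mapping.lookup m v)) 1" for A
    by (induction A rule: infinite_finite_induct) (auto simp: mult_single)
  then show ?thesis unfolding monev_def Var_power using pm_expand[of m, symmetric] by simp
qed

lemma rhom_const: "rhom (\<lambda>a. Poly_Mapping.single (0::'k::comm_monoid_add) (a::'b::comm_ring_1))"
  by (simp add: rhom_def single_add mult_single)

lemma ev_id: "ev (\<lambda>a. Poly_Mapping.single 0 a) Var (p :: 'a::comm_ring_1 mpoly) = p"
proof -
  have "ev (\<lambda>a. Poly_Mapping.single 0 a) Var p = (\<Sum>m\<in>Poly_Mapping.keys p. Poly_Mapping.single m (Poly_Mapping.lookup p m))"
    by (simp add: ev_def monev_Var mult_single)
  then show ?thesis using pm_expand[of p] by simp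
qed



lemma PolyIn_iff: "p \<in> PolyIn V \<longleftrightarrow> (\<forall>m\<in>Poly_Mapping.keys p. Poly_Mapping.keys m \<subseteq> V)"
  by (simp add: PolyIn_def)

lemma PolyIn_zero[simp]: "0 \<in> PolyIn V" by (simp add: PolyIn_def)
lemma PolyIn_single0[simp]: "Poly_Mapping.single 0 a \<in> PolyIn V" by (simp add: PolyIn_def)
lemma PolyIn_one[simp]: "(1::'a::comm_ring_1 mpoly) \<in> PolyIn V"
  using PolyIn_single0[of "1::'a" V] by (simp add: single_one)
lemma PolyIn_Var: "v \<in> V \<Longrightarrow> (Var v :: 'a::comm_ring_1 mpoly) \<in> PolyIn V"
  by (simp add: PolyIn_def Var_def)
lemma PolyIn_add: "p \<in> PolyIn V \<Longrightarrow> q \<in> PolyIn V \<Longrightarrow> p + q \<in> PolyIn V"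
  unfolding PolyIn_def using keys_add[of p q] by auto
lemma PolyIn_uminus: "p \<in> PolyIn V \<Longrightarrow> - (p::'a::comm_ring_1 mpoly) \<in> PolyIn V"
  unfolding PolyIn_def by simp
lemma PolyIn_diff: "p \<in> PolyIn V \<Longrightarrow> q \<in> PolyIn V \<Longrightarrow> p - (q::'a::comm_ring_1 mpoly) \<in> PolyIn V"
  using PolyIn_add[of p V "-q"] PolyIn_uminus[of q V] by simp
lemma PolyIn_mult: "p \<in> PolyIn V \<Longrightarrow> q \<in> PolyIn V \<Longrightarrow> p * (q::'a::comm_ring_1 mpoly) \<in> PolyIn V"
proof -
  assume p: "p \<in> PolyIn V" and q: "q \<in> PolyIn V"
  show ?thesis unfolding PolyIn_def
  proof (intro CollectI ballI)
    fix m assume "m \<in> Poly_Mapping.keys (p * q)"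
    then obtain a b where "m = a + b" "a \<in> Poly_Mapping.keys p" "b \<in> Poly_Mapping.keys q"
      using keys_mult[of p q] by blast
    then show "Poly_Mapping.keys m \<subseteq> V" using p q keys_add[of a b] unfolding PolyIn_def by fastforce
  qed
qed
lemma PolyIn_sum: "(\<And>a. a \<in> A \<Longrightarrow> f a \<in> PolyIn V) \<Longrightarrow> sum f A \<in> PolyIn V"
  by (induction A rule: infinite_finite_induct) (auto intro: PolyIn_add)
lemma PolyIn_power: "p \<in> PolyIn V \<Longrightarrow> (p::'a::comm_ring_1 mpoly) ^ k \<in> PolyIn V"
  by (induction k) (auto intro: PolyIn_mult)
lemma PolyIn_mono: "V \<subseteq> W \<Longrightarrow> PolyIn V \<subseteq> PolyIn W"
  unfolding PolyIn_def by blast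

lemma ev_PolyIn:
  assumes "\<And>m. m \<in> Poly_Mapping.keys p \<Longrightarrow> c (Poly_Mapping.lookup p m) \<in> PolyIn V"
    "\<And>m v. m \<in> Poly_Mapping.keys p \<Longrightarrow> v \<in> Poly_Mapping.keys m \<Longrightarrow> \<sigma> v \<in> PolyIn V"
  shows "ev c \<sigma> p \<in> PolyIn V"
  by (rule ev_closed[where S="PolyIn V"]) (simp_all add: PolyIn_add PolyIn_mult assms)

lemma gen_idealI: "finite (I::nat set) \<Longrightarrow> (\<And>i. i \<in> I \<Longrightarrow> c i \<in> R \<and> g i \<in> G) \<Longrightarrow> x = (\<Sum>i\<in>I. c i * g i) \<Longrightarrow> x \<in> gen_ideal R G"
  unfolding gen_ideal_def by auto

lemma gen_idealE:
  assumes "x \<in> gen_ideal R G"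
  obtains I c g where "finite (I::nat set)" "\<And>i. i \<in> I \<Longrightarrow> c i \<in> R" "\<And>i. i \<in> I \<Longrightarrow> g i \<in> G" "x = (\<Sum>i\<in>I. c i * g i)"
  using assms unfolding gen_ideal_def mem_Collect_eq by metis

lemma gi_zero: "0 \<in> gen_ideal R G"
  unfolding gen_ideal_def by (rule CollectI, rule exI[of _ "{}"]) simp

lemma gi_gen: "1 \<in> R \<Longrightarrow> g \<in> G \<Longrightarrow> g \<in> gen_ideal R G"
  unfolding gen_ideal_def by (rule CollectI, rule exI[of _ "{0}"], rule exI[of _ "\<lambda>_. 1"], rule exI[of _ "\<lambda>_. g"]) simp

lemma gi_add:
  assumes "x \<in> gen_ideal R G" "y \<in> gen_ideal R G"
  shows "x + y \<in> gen_ideal R G"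
proof -
  obtain I1 c1 g1 where 1: "finite (I1::nat set)" "\<forall>i\<in>I1. c1 i \<in> R \<and> g1 i \<in> G" "x = (\<Sum>i\<in>I1. c1 i * g1 i)"
    using assms(1) unfolding gen_ideal_def mem_Collect_eq by metis
  obtain I2 c2 g2 where 2: "finite (I2::nat set)" "\<forall>i\<in>I2. c2 i \<in> R \<and> g2 i \<in> G" "y = (\<Sum>i\<in>I2. c2 i * g2 i)"
    using assms(2) unfolding gen_ideal_def mem_Collect_eq by metis
  define I where "I = (\<lambda>i. 2*i) ` I1 \<union> (\<lambda>i. Suc (2*i)) ` I2"
  define c where "c i = (if even i then c1 (i div 2) else c2 (i div 2))" for i
  define g where "g i = (if even i then g1 (i div 2) else g2 (i div 2))" for i
  have inj1: "inj (\<lambda>i::nat. 2*i)" by (auto simp: inj_def)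
  have inj2: "inj (\<lambda>i::nat. Suc (2*i))" by (auto simp: inj_def)
  have disj: "(\<lambda>i::nat. 2*i) ` I1 \<inter> (\<lambda>i. Suc (2*i)) ` I2 = {}" by auto presburger
  have "(\<Sum>i\<in>I. c i * g i) = (\<Sum>i\<in>(\<lambda>i. 2*i) ` I1. c i * g i) + (\<Sum>i\<in>(\<lambda>i. Suc (2*i)) ` I2. c i * g i)"
    unfolding I_def using 1(1) 2(1) disj by (intro sum.union_disjoint) auto
  also have "\<dots> = x + y"
    using 1(3) 2(3) by (simp add: sum.reindex[OF inj_on_subset[OF inj1]] sum.reindex[OF inj_on_subset[OF inj2]] c_def g_def)
  finally have "x + y = (\<Sum>i\<in>I. c i * g i)" by simp
  moreover have "finite I" using 1(1) 2(1) by (simp add: I_def)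
  moreover have "\<forall>i\<in>I. c i \<in> R \<and> g i \<in> G" using 1(2) 2(2) by (auto simp: I_def c_def g_def)
  ultimately show ?thesis by (intro gen_idealI[where I=I and c=c and g=g]) auto
qed

lemma gi_sum: "(\<And>a. a \<in> A \<Longrightarrow> f a \<in> gen_ideal R G) \<Longrightarrow> sum f A \<in> gen_ideal R G"
  by (induction A rule: infinite_finite_induct) (auto intro: gi_add gi_zero)

lemma gi_mult:
  assumes "\<And>a b. a \<in> R \<Longrightarrow> b \<in> R \<Longrightarrow> a * b \<in> R" "r \<in> R" "x \<in> gen_ideal R G"
  shows "r * x \<in> gen_ideal R G"
proof -
  obtain I c g where 1: "finite (I::nat set)" "\<forall>i\<in>I. c i \<in> R \<and> g i \<in> G" "x = (\<Sum>i\<in>I. c i * g i)"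
    using assms(3) unfolding gen_ideal_def mem_Collect_eq by metis
  have "r * x = (\<Sum>i\<in>I. (r * c i) * g i)" using 1(3) by (simp add: sum_distrib_left mult.assoc)
  moreover have "\<forall>i\<in>I. r * c i \<in> R \<and> g i \<in> G" using 1(2) assms(1,2) by simp
  ultimately show ?thesis using 1(1) by (intro gen_idealI[where I=I and c="\<lambda>i. r * c i" and g=g]) auto
qed

lemma gi_mono: "R \<subseteq> R' \<Longrightarrow> G \<subseteq> G' \<Longrightarrow> gen_ideal R G \<subseteq> gen_ideal R' G'"
proof
  fix x assume RG: "R \<subseteq> R'" "G \<subseteq> G'" and xin: "x \<in> gen_ideal R G"
  from xin show "x \<in> gen_ideal R' G'"
  proof (rule gen_idealE)
    fix I c g assume "finite (I::nat set)" "\<And>i. i \<in> I \<Longrightarrow> c i \<in> R" "\<And>i. i \<in> I \<Longrightarrow> g i \<in> G" "x = (\<Sum>i\<in>I. c i * g i)"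
    then show "x \<in> gen_ideal R' G'" using RG by (intro gen_idealI[where I=I and c=c and g=g]) auto
  qed
qed

lemma gi_PolyIn_mult: "r \<in> PolyIn V \<Longrightarrow> x \<in> gen_ideal (PolyIn V) G \<Longrightarrow> r * (x::'a::comm_ring_1 mpoly) \<in> gen_ideal (PolyIn V) G"
  by (rule gi_mult) (auto intro: PolyIn_mult)

lemma rhom_Fract1: "rhom (\<lambda>a::'a::idom. Fract a 1)"
  by (simp add: rhom_def One_fract_def)

lemma Fract1_inj: "Fract (a::'a::idom) 1 = Fract b 1 \<longleftrightarrow> a = b"
  by (simp add: eq_fract)

lemma Fract1_zero: "Fract (a::'a::idom) 1 = 0 \<longleftrightarrow> a = 0"
  by (simp add: Zero_fract_def eq_fract)

lemma common_denom:
  fixes X :: "'a::idom fract set"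
  assumes "finite X"
  shows "\<exists>D. D \<noteq> 0 \<and> (\<forall>x\<in>X. \<exists>a. Fract D 1 * x = Fract a 1)"
  using assms
proof (induction X rule: finite_induct)
  case empty
  show ?case by (rule exI[of _ 1]) simp
next
  case (insert x X)
  then obtain D where D: "D \<noteq> 0" "\<forall>y\<in>X. \<exists>a. Fract D 1 * y = Fract a 1" by metis
  obtain a b where x: "x = Fract a b" "b \<noteq> 0" by (cases x)
  have "Fract (D * b) 1 * x = Fract (D * b * a) b" using x by simp
  also have "\<dots> = Fract (D * a) 1" using x(2) by (simp add: eq_fract)
  finally have 1: "Fract (D * b) 1 * x = Fract (D * a) 1" .
  have 2: "\<exists>a'. Fract (D * b) 1 * y = Fract a' 1" if yX: "y \<in> X" for y
  proof -
    obtain a' where a': "Fract D 1 * y = Fract a' 1" using D(2) yX by metis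
    have "Fract (D * b) 1 * y = Fract b 1 * (Fract D 1 * y)" by (simp add: mult.commute mult.left_commute)
    also have "\<dots> = Fract (b * a') 1" using a' by simp
    finally show ?thesis by (rule exI)
  qed
  have 3: "D * b \<noteq> 0" using D(1) x(2) by simp
  show ?case using 1 2 3 by (intro exI[of _ "D * b"]) auto
qed



lemma Fract11[simp]: "Fract (1::'a::idom) 1 = 1" by (simp add: One_fract_def)
lemma Fract01[simp]: "Fract (0::'a::idom) 1 = 0" by (simp add: Zero_fract_def)
lemma Fract_power1: "Fract (a::'a::idom) 1 ^ k = Fract (a ^ k) 1"
  by (induction k) simp_all

definition cE :: "'a::field \<Rightarrow> 'a mpoly fract mpoly" where
  "cE a = Poly_Mapping.single 0 (Fract (Poly_Mapping.single 0 a) 1)"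
definition \<sigma>E :: "nat \<Rightarrow> nat \<Rightarrow> 'a::field mpoly fract mpoly" where
  "\<sigma>E d v = (if v < d then Poly_Mapping.single 0 (Fract (Var v) 1) else Var v)"

definition hiv :: "nat \<Rightarrow> nat \<Rightarrow> nat \<Rightarrow> (nat \<Rightarrow>\<^sub>0 nat)" where
  "hiv d v k = (if d \<le> v then Poly_Mapping.single v k else 0)"
definition lov :: "nat \<Rightarrow> nat \<Rightarrow> nat \<Rightarrow> (nat \<Rightarrow>\<^sub>0 nat)" where
  "lov d v k = (if v < d then Poly_Mapping.single v k else 0)"

lemma \<sigma>E_power: "\<sigma>E d v ^ k = Poly_Mapping.single (hiv d v k) (Fract (Poly_Mapping.single (lov d v k) 1) (1::'a::field mpoly))"
proof (cases "v < d")
  case True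
  then show ?thesis
    by (simp add: \<sigma>E_def hiv_def lov_def single_power Fract_power1 Var_power)
next
  case False
  then show ?thesis
    by (simp add: \<sigma>E_def hiv_def lov_def Var_power)
qed

lemma prod_singles:
  "(\<Prod>v\<in>A. Poly_Mapping.single (h v) (Fract (Poly_Mapping.single (l v) 1) (1::'a::field mpoly))) =
    Poly_Mapping.single (\<Sum>v\<in>A. h v) (Fract (Poly_Mapping.single (\<Sum>v\<in>A. l v) 1) 1)"
  by (induction A rule: infinite_finite_induct) (simp_all add: mult_single)

lemma lookup_hiv: "Poly_Mapping.lookup (hiv d v k) w = (if v = w then (if d \<le> w then k else 0) else 0)"
  by (simp add: hiv_def lookup_single when_def)
lemma lookup_lov: "Poly_Mapping.lookup (lov d v k) w = (if v = w then (if w < d then k else 0) else 0)"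
  by (simp add: lov_def lookup_single when_def)

lemma sum_hiv: "(\<Sum>v\<in>Poly_Mapping.keys m. hiv d v (Poly_Mapping.lookup m v)) = mon_hi d m"
proof (rule poly_mapping_eqI)
  fix w
  show "Poly_Mapping.lookup (\<Sum>v\<in>Poly_Mapping.keys m. hiv d v (Poly_Mapping.lookup m v)) w = Poly_Mapping.lookup (mon_hi d m) w"
    by (simp add: lookup_sum lookup_hiv mon_hi_def lookup_mapp when_def in_keys_iff)
qed

lemma sum_lov: "(\<Sum>v\<in>Poly_Mapping.keys m. lov d v (Poly_Mapping.lookup m v)) = mon_lo d m"
proof (rule poly_mapping_eqI)
  fix w
  show "Poly_Mapping.lookup (\<Sum>v\<in>Poly_Mapping.keys m. lov d v (Poly_Mapping.lookup m v)) w = Poly_Mapping.lookup (mon_lo d m) w"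
    by (simp add: lookup_sum lookup_lov mon_lo_def lookup_mapp when_def in_keys_iff)
qed

lemma monev_\<sigma>E: "monev (\<sigma>E d) m = Poly_Mapping.single (mon_hi d m) (Fract (Poly_Mapping.single (mon_lo d m) 1) (1::'a::field mpoly))"
  unfolding monev_def \<sigma>E_power prod_singles sum_hiv sum_lov ..

lemma rhom_cE: "rhom (cE :: 'a::field \<Rightarrow> _)"
proof -
  have "cE = (\<lambda>x. Poly_Mapping.single 0 x) \<circ> (\<lambda>a. Fract a 1) \<circ> (\<lambda>a::'a. Poly_Mapping.single 0 a)"
    by (auto simp: cE_def)
  moreover have "rhom ((\<lambda>x. Poly_Mapping.single (0::nat\<Rightarrow>\<^sub>0nat) x) \<circ> (\<lambda>a. Fract a 1) \<circ> (\<lambda>a::'a. Poly_Mapping.single (0::nat\<Rightarrow>\<^sub>0nat) a))"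
    by (intro rhom_comp rhom_const rhom_Fract1)
  ultimately show ?thesis by simp
qed

lemma emb_ev: "emb d p = ev cE (\<sigma>E d) (p :: 'a::field mpoly)"
  unfolding emb_def ev_def
proof (rule sum.cong)
  fix m
  show "Poly_Mapping.single (mon_hi d m) (Fract (Poly_Mapping.single (mon_lo d m) (Poly_Mapping.lookup p m)) 1) =
    cE (Poly_Mapping.lookup p m) * monev (\<sigma>E d) m"
    by (simp add: monev_\<sigma>E cE_def mult_single)
qed simp



definition c0 :: "'a::field \<Rightarrow> 'a mpoly mpoly" where
  "c0 a = Poly_Mapping.single 0 (Poly_Mapping.single 0 a)"
definition \<sigma>0 :: "nat \<Rightarrow> nat \<Rightarrow> 'a::field mpoly mpoly" where
  "\<sigma>0 d v = (if v < d then Poly_Mapping.single 0 (Var v) else Var v)"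
definition E0 :: "nat \<Rightarrow> 'a::field mpoly \<Rightarrow> 'a mpoly mpoly" where
  "E0 d = ev c0 (\<sigma>0 d)"

definition \<iota>c :: "'a::field mpoly \<Rightarrow> 'a mpoly fract mpoly" where
  "\<iota>c a = Poly_Mapping.single 0 (Fract a 1)"
definition \<iota> :: "'a::field mpoly mpoly \<Rightarrow> 'a mpoly fract mpoly" where
  "\<iota> = ev \<iota>c Var"

lemma rhom_c0: "rhom (c0 :: 'a::field \<Rightarrow> _)"
proof -
  have "c0 = (\<lambda>x. Poly_Mapping.single (0::nat\<Rightarrow>\<^sub>0nat) x) \<circ> (\<lambda>a::'a. Poly_Mapping.single (0::nat\<Rightarrow>\<^sub>0nat) a)"
    by (auto simp: c0_def)
  moreover have "rhom ((\<lambda>x. Poly_Mapping.single (0::nat\<Rightarrow>\<^sub>0nat) x) \<circ> (\<lambda>a::'a. Poly_Mapping.single (0::nat\<Rightarrow>\<^sub>0nat) a))"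
    by (intro rhom_comp rhom_const)
  ultimately show ?thesis by simp
qed

lemma rhom_\<iota>c: "rhom (\<iota>c :: 'a::field mpoly \<Rightarrow> _)"
proof -
  have "\<iota>c = (\<lambda>x. Poly_Mapping.single (0::nat\<Rightarrow>\<^sub>0nat) x) \<circ> (\<lambda>a::'a mpoly. Fract a 1)"
    by (auto simp: \<iota>c_def)
  moreover have "rhom ((\<lambda>x. Poly_Mapping.single (0::nat\<Rightarrow>\<^sub>0nat) x) \<circ> (\<lambda>a::'a mpoly. Fract a 1))"
    by (intro rhom_comp rhom_const rhom_Fract1)
  ultimately show ?thesis by simp
qed

lemma rhom_E0: "rhom (E0 d :: 'a::field mpoly \<Rightarrow> _)"
  unfolding E0_def by (intro rhom_ev rhom_c0)

lemma rhom_\<iota>: "rhom (\<iota> :: 'a::field mpoly mpoly \<Rightarrow> _)"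
  unfolding \<iota>_def by (intro rhom_ev rhom_\<iota>c)

lemma emb_E0: "emb d p = \<iota> (E0 d (p :: 'a::field mpoly))"
proof -
  have "\<iota> (E0 d p) = ev (\<iota> \<circ> c0) (\<iota> \<circ> \<sigma>0 d) p"
    unfolding E0_def by (rule ev_comp[OF rhom_c0 rhom_\<iota>])
  moreover have "\<iota> \<circ> c0 = (cE :: 'a \<Rightarrow> _)"
    by (rule ext) (simp add: c0_def \<iota>_def ev_const rhom_\<iota>c \<iota>c_def cE_def)
  moreover have "\<iota> \<circ> \<sigma>0 d = (\<sigma>E d :: nat \<Rightarrow> 'a mpoly fract mpoly)"
    by (rule ext) (simp add: \<sigma>0_def \<iota>_def ev_const ev_Var rhom_\<iota>c \<iota>c_def \<sigma>E_def)
  ultimately show ?thesis by (simp add: emb_ev)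
qed

lemma lookup_\<iota>: "Poly_Mapping.lookup (\<iota> q) m = Fract (Poly_Mapping.lookup q m) (1 :: 'a::field mpoly)"
proof -
  have "\<iota> q = (\<Sum>m\<in>Poly_Mapping.keys q. Poly_Mapping.single m (Fract (Poly_Mapping.lookup q m) (1::'a mpoly)))"
    unfolding \<iota>_def ev_def by (simp add: monev_Var \<iota>c_def mult_single)
  then show ?thesis
    by (simp add: lookup_sum lookup_single when_def in_keys_iff)
qed

lemma \<iota>_inj: "\<iota> q = \<iota> q' \<Longrightarrow> q = (q' :: 'a::field mpoly mpoly)"
  by (rule poly_mapping_eqI) (metis lookup_\<iota> Fract1_inj)

definition \<Lambda> :: "'a::field mpoly mpoly \<Rightarrow> 'a mpoly" where
  "\<Lambda> = ev (\<lambda>a. a) Var"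

lemma rhom_id: "rhom (\<lambda>a. a)" by (simp add: rhom_def)

lemma rhom_\<Lambda>: "rhom (\<Lambda> :: 'a::field mpoly mpoly \<Rightarrow> _)"
  unfolding \<Lambda>_def by (intro rhom_ev rhom_id)

lemma \<Lambda>_E0: "\<Lambda> (E0 d p) = (p :: 'a::field mpoly)"
proof -
  have "\<Lambda> (E0 d p) = ev (\<Lambda> \<circ> c0) (\<Lambda> \<circ> \<sigma>0 d) p"
    unfolding E0_def by (rule ev_comp[OF rhom_c0 rhom_\<Lambda>])
  moreover have "\<Lambda> \<circ> c0 = (\<lambda>a::'a. Poly_Mapping.single 0 a)"
    by (rule ext) (simp add: c0_def \<Lambda>_def ev_const rhom_id)
  moreover have "\<Lambda> \<circ> \<sigma>0 d = (Var :: nat \<Rightarrow> 'a mpoly)"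
    by (rule ext) (simp add: \<sigma>0_def \<Lambda>_def ev_const ev_Var rhom_id)
  ultimately show ?thesis by (simp add: ev_id)
qed

lemma emb_inj: "emb d p = emb d q \<Longrightarrow> p = (q :: 'a::field mpoly)"
  by (metis emb_E0 \<iota>_inj \<Lambda>_E0)

lemma emb_zero: "emb d (0 :: 'a::field mpoly) = 0"
  by (simp add: emb_ev ev_zero)

lemma emb_eq_zero: "emb d p = 0 \<longleftrightarrow> p = (0 :: 'a::field mpoly)"
  by (metis emb_inj emb_zero)

definition \<sigma>\<Psi> :: "nat \<Rightarrow> 'a::field mpoly mpoly" where
  "\<sigma>\<Psi> z = Poly_Mapping.single 0 (Var z)"
definition \<Psi> :: "nat \<Rightarrow> 'a::field mpoly mpoly \<Rightarrow> 'a mpoly mpoly" where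
  "\<Psi> d = ev (E0 d) \<sigma>\<Psi>"

lemma rhom_\<Psi>: "rhom (\<Psi> d :: 'a::field mpoly mpoly \<Rightarrow> _)"
  unfolding \<Psi>_def by (intro rhom_ev rhom_E0)

lemma \<Psi>_E0: "\<Psi> d (E0 d p) = Poly_Mapping.single 0 (p :: 'a::field mpoly)"
proof -
  have "\<Psi> d (E0 d p) = ev (\<Psi> d \<circ> c0) (\<Psi> d \<circ> \<sigma>0 d) p"
    unfolding E0_def[of d] by (rule ev_comp[OF rhom_c0 rhom_\<Psi>])
  moreover have "\<Psi> d \<circ> c0 = (c0 :: 'a \<Rightarrow> _)"
    by (rule ext) (simp add: c0_def \<Psi>_def ev_const rhom_E0, simp add: E0_def ev_const rhom_c0 c0_def)
  moreover have "\<Psi> d \<circ> \<sigma>0 d = (\<sigma>\<Psi> :: nat \<Rightarrow> 'a mpoly mpoly)"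
  proof (rule ext)
    fix v
    show "(\<Psi> d \<circ> \<sigma>0 d) v = (\<sigma>\<Psi> v :: 'a mpoly mpoly)"
      by (simp add: \<sigma>0_def \<Psi>_def ev_const ev_Var rhom_E0) (simp add: E0_def ev_Var rhom_c0 \<sigma>0_def \<sigma>\<Psi>_def)
  qed
  moreover have "ev c0 \<sigma>\<Psi> p = (\<lambda>x. Poly_Mapping.single 0 x) (ev (\<lambda>a. Poly_Mapping.single 0 a) Var p)"
  proof -
    have "(\<lambda>x. Poly_Mapping.single (0::nat\<Rightarrow>\<^sub>0nat) x) (ev (\<lambda>a. Poly_Mapping.single 0 a) Var p) =
      ev ((\<lambda>x. Poly_Mapping.single 0 x) \<circ> (\<lambda>a. Poly_Mapping.single 0 a)) ((\<lambda>x. Poly_Mapping.single 0 x) \<circ> Var) p"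
      by (rule ev_comp[OF rhom_const rhom_const])
    moreover have "(\<lambda>x. Poly_Mapping.single (0::nat\<Rightarrow>\<^sub>0nat) x) \<circ> (\<lambda>a::'a. Poly_Mapping.single (0::nat\<Rightarrow>\<^sub>0nat) a) = c0"
      by (auto simp: c0_def)
    moreover have "(\<lambda>x. Poly_Mapping.single (0::nat\<Rightarrow>\<^sub>0nat) x) \<circ> (Var :: nat \<Rightarrow> 'a mpoly) = \<sigma>\<Psi>"
      by (auto simp: \<sigma>\<Psi>_def)
    ultimately show ?thesis by simp
  qed
  ultimately show ?thesis by (simp add: ev_id)
qed



definition coeffs_in :: "nat set \<Rightarrow> 'a::field mpoly mpoly \<Rightarrow> bool" where
  "coeffs_in V q \<longleftrightarrow> (\<forall>w. Poly_Mapping.lookup q w \<in> PolyIn V)"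

lemma coeffs_in_add: "coeffs_in V p \<Longrightarrow> coeffs_in V q \<Longrightarrow> coeffs_in V (p + q)"
  by (simp add: coeffs_in_def lookup_add PolyIn_add)

lemma coeffs_in_mult: "coeffs_in V p \<Longrightarrow> coeffs_in V q \<Longrightarrow> coeffs_in V (p * q)"
  unfolding coeffs_in_def
proof
  fix w assume p: "\<forall>w. Poly_Mapping.lookup p w \<in> PolyIn V" and q: "\<forall>w. Poly_Mapping.lookup q w \<in> PolyIn V"
  show "Poly_Mapping.lookup (p * q) w \<in> PolyIn V"
    unfolding mult_expand[of p q] lookup_sum
    by (intro PolyIn_sum) (simp add: lookup_single when_def PolyIn_mult p q)
qed

lemma coeffs_in_const: "a \<in> PolyIn V \<Longrightarrow> coeffs_in V (Poly_Mapping.single 0 a)"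
  by (simp add: coeffs_in_def lookup_single when_def)

lemma coeffs_in_zero: "coeffs_in V 0"
  by (simp add: coeffs_in_def)

lemma coeffs_in_one: "coeffs_in V (1 :: 'a::field mpoly mpoly)"
  using coeffs_in_const[of "1::'a mpoly" V] by (simp add: single_one)

lemma coeffs_in_Var: "coeffs_in V (Var z :: 'a::field mpoly mpoly)"
  by (simp add: coeffs_in_def Var_def lookup_single when_def)

lemma coeffs_in_mono: "coeffs_in V q \<Longrightarrow> V \<subseteq> W \<Longrightarrow> coeffs_in W q"
  unfolding coeffs_in_def by (metis PolyIn_mono subsetD)

lemma ev_coeffs:
  assumes "\<And>m. m \<in> Poly_Mapping.keys p \<Longrightarrow> coeffs_in V (c (Poly_Mapping.lookup p m))"
    "\<And>m v. m \<in> Poly_Mapping.keys p \<Longrightarrow> v \<in> Poly_Mapping.keys m \<Longrightarrow> coeffs_in V (\<sigma> v)"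
  shows "coeffs_in V (ev c \<sigma> p)"
  using ev_closed[where S="Collect (coeffs_in V)" and p=p and c=c and \<sigma>=\<sigma>]
  by (simp add: coeffs_in_add coeffs_in_mult coeffs_in_zero coeffs_in_one assms)

lemma E0_coeffs: "coeffs_in {..<d} (E0 d (p :: 'a::field mpoly))"
  unfolding E0_def
proof (rule ev_coeffs)
  fix m
  show "coeffs_in {..<d} (c0 (Poly_Mapping.lookup p m))" by (simp add: c0_def coeffs_in_const)
next
  fix m v
  show "coeffs_in {..<d} (\<sigma>0 d v :: 'a mpoly mpoly)"
    by (simp add: \<sigma>0_def coeffs_in_const coeffs_in_Var PolyIn_Var)
qed

lemma \<Psi>_coeffs:
  assumes "d \<le> n" "q \<in> PolyIn {..<n}"
  shows "coeffs_in {..<n} (\<Psi> d (q :: 'a::field mpoly mpoly))"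
  unfolding \<Psi>_def
proof (rule ev_coeffs)
  fix m assume "m \<in> Poly_Mapping.keys q"
  show "coeffs_in {..<n} (E0 d (Poly_Mapping.lookup q m) :: 'a mpoly mpoly)"
    using E0_coeffs[of d "Poly_Mapping.lookup q m"] by (rule coeffs_in_mono) (use assms(1) in auto)
next
  fix m v assume "m \<in> Poly_Mapping.keys q" "v \<in> Poly_Mapping.keys m"
  then have "v < n" using assms(2) unfolding PolyIn_def by auto
  then show "coeffs_in {..<n} (\<sigma>\<Psi> v :: 'a mpoly mpoly)"
    by (simp add: \<sigma>\<Psi>_def coeffs_in_const PolyIn_Var)
qed

lemma lookup_mult_const: "Poly_Mapping.lookup (q * Poly_Mapping.single 0 a) w = Poly_Mapping.lookup q w * (a::'b::comm_ring_1)"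
proof -
  have "q * Poly_Mapping.single 0 a = (\<Sum>m\<in>Poly_Mapping.keys q. Poly_Mapping.single m (Poly_Mapping.lookup q m * a))"
    by (subst pm_expand[of q]) (simp add: sum_distrib_right mult_single)
  then show ?thesis
    by (simp add: lookup_sum lookup_single when_def in_keys_iff)
qed

lemma \<iota>_single: "\<iota> (Poly_Mapping.single m a) = Poly_Mapping.single m (Fract (a::'a::field mpoly) 1)"
  by (simp add: \<iota>_def ev_single rhom_\<iota>c \<iota>c_def monev_Var mult_single)

lemma PolyIn_single: "Poly_Mapping.keys m \<subseteq> V \<Longrightarrow> Poly_Mapping.single m a \<in> PolyIn V"
  by (simp add: PolyIn_def)



lemma \<Psi>_const: "\<Psi> d (Poly_Mapping.single 0 D) = E0 d (D :: 'a::field mpoly)"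
  by (simp add: \<Psi>_def ev_const rhom_E0)

lemma forward:
  fixes n d :: nat and hs :: "('a::field) mpoly list" and f :: "'a mpoly"
  assumes dn: "d \<le> n"
    and hs: "set hs \<subseteq> PolyIn {..<n}"
    and f: "f \<in> PolyIn {..<n}"
    and rad: "emb d f \<in> radical_in (PolyIn {d..<n})
            (gen_ideal (PolyIn {d..<n}) (emb d ` gen_ideal (PolyIn {..<n}) (set hs)))"
  shows "gen_ideal (PolyIn {..n}) (set hs \<union> {f * Var n - 1}) \<inter> PolyIn {..<d} \<noteq> {0}"
proof -
  define H where "H = gen_ideal (PolyIn {..<n}) (set hs)"
  obtain k where k: "emb d f ^ k \<in> gen_ideal (PolyIn {d..<n}) (emb d ` H)"
    using rad unfolding radical_in_def H_def by blast
  have "\<exists>J c g. finite (J::nat set) \<and> (\<forall>j\<in>J. c j \<in> PolyIn {d..<n} \<and> g j \<in> emb d ` H) \<and> emb d f ^ k = (\<Sum>j\<in>J. c j * g j)"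
    using k unfolding gen_ideal_def by simp
  then obtain J c g where J: "finite (J::nat set)" and cg: "\<forall>j\<in>J. c j \<in> PolyIn {d..<n} \<and> g j \<in> emb d ` H"
    and eq: "emb d f ^ k = (\<Sum>j\<in>J. c j * g j)" by (elim exE conjE) (rule that)
  have c: "\<And>j. j \<in> J \<Longrightarrow> c j \<in> PolyIn {d..<n}" and g: "\<And>j. j \<in> J \<Longrightarrow> g j \<in> emb d ` H"
    using cg by auto
  have "\<forall>j\<in>J. \<exists>u. u \<in> H \<and> g j = emb d u" using g by (auto simp: image_iff)
  then obtain u where u: "\<And>j. j \<in> J \<Longrightarrow> u j \<in> H \<and> g j = emb d (u j)"
    using bchoice[of J "\<lambda>j u. u \<in> H \<and> g j = emb d u"] by metis
  define X where "X = (\<Union>j\<in>J. Poly_Mapping.lookup (c j) ` Poly_Mapping.keys (c j))"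
  have "finite X" unfolding X_def using J by simp
  then obtain D where D0: "D \<noteq> 0" and D: "\<forall>x\<in>X. \<exists>a. Fract D 1 * x = Fract a 1"
    using common_denom by metis
  then obtain nf where nf: "\<And>x. x \<in> X \<Longrightarrow> Fract D 1 * x = Fract (nf x) 1"
    using bchoice[of X "\<lambda>x a. Fract D 1 * x = Fract a 1"] by metis
  define c2 where "c2 j = (\<Sum>m\<in>Poly_Mapping.keys (c j). Poly_Mapping.single m (nf (Poly_Mapping.lookup (c j) m)))" for j
  have c2_eq: "\<iota> (c2 j) = Poly_Mapping.single 0 (Fract D 1) * c j" if jJ: "j \<in> J" for j
  proof -
    have "\<iota> (c2 j) = (\<Sum>m\<in>Poly_Mapping.keys (c j). Poly_Mapping.single m (Fract (nf (Poly_Mapping.lookup (c j) m)) 1))"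
      unfolding c2_def by (simp add: rhom_sum[OF rhom_\<iota>] \<iota>_single)
    also have "\<dots> = (\<Sum>m\<in>Poly_Mapping.keys (c j). Poly_Mapping.single 0 (Fract D 1) * Poly_Mapping.single m (Poly_Mapping.lookup (c j) m))"
    proof (rule sum.cong)
      fix m assume m: "m \<in> Poly_Mapping.keys (c j)"
      then have "Poly_Mapping.lookup (c j) m \<in> X" unfolding X_def using jJ by blast
      then show "Poly_Mapping.single m (Fract (nf (Poly_Mapping.lookup (c j) m)) 1) =
          Poly_Mapping.single 0 (Fract D 1) * Poly_Mapping.single m (Poly_Mapping.lookup (c j) m)"
        by (simp add: mult_single nf)
    qed simp
    also have "\<dots> = Poly_Mapping.single 0 (Fract D 1) * c j"
      by (simp add: sum_distrib_left[symmetric] pm_expand[symmetric])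
    finally show ?thesis .
  qed
  have c2_in: "c2 j \<in> PolyIn {..<n}" if jJ: "j \<in> J" for j
    unfolding c2_def
  proof (rule PolyIn_sum)
    fix m assume "m \<in> Poly_Mapping.keys (c j)"
    then have "Poly_Mapping.keys m \<subseteq> {d..<n}" using c[OF jJ] unfolding PolyIn_def by blast
    then show "Poly_Mapping.single m (nf (Poly_Mapping.lookup (c j) m)) \<in> PolyIn {..<n}"
      by (intro PolyIn_single) auto
  qed
  have "\<iota> (Poly_Mapping.single 0 D * E0 d f ^ k) = Poly_Mapping.single 0 (Fract D 1) * emb d f ^ k"
    by (simp add: rhom_mult[OF rhom_\<iota>] rhom_power[OF rhom_\<iota>] emb_E0 \<iota>_single)
  also have "\<dots> = (\<Sum>j\<in>J. (Poly_Mapping.single 0 (Fract D 1) * c j) * g j)"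
    by (simp add: eq sum_distrib_left mult.assoc)
  also have "\<dots> = (\<Sum>j\<in>J. \<iota> (c2 j) * \<iota> (E0 d (u j)))"
    by (rule sum.cong) (simp_all add: c2_eq u emb_E0)
  also have "\<dots> = \<iota> (\<Sum>j\<in>J. c2 j * E0 d (u j))"
    by (simp add: rhom_sum[OF rhom_\<iota>] rhom_mult[OF rhom_\<iota>])
  finally have eqB: "Poly_Mapping.single 0 D * E0 d f ^ k = (\<Sum>j\<in>J. c2 j * E0 d (u j))"
    by (rule \<iota>_inj)
  have "E0 d D * Poly_Mapping.single 0 (f ^ k) = \<Psi> d (Poly_Mapping.single 0 D * E0 d f ^ k)"
    by (simp add: rhom_mult[OF rhom_\<Psi>] rhom_power[OF rhom_\<Psi>] \<Psi>_E0 \<Psi>_const rhom_power[OF rhom_const, symmetric])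
  also have "\<dots> = (\<Sum>j\<in>J. \<Psi> d (c2 j) * Poly_Mapping.single 0 (u j))"
    by (simp add: eqB rhom_sum[OF rhom_\<Psi>] rhom_mult[OF rhom_\<Psi>] \<Psi>_E0)
  finally have eqC: "E0 d D * Poly_Mapping.single 0 (f ^ k) = (\<Sum>j\<in>J. \<Psi> d (c2 j) * Poly_Mapping.single 0 (u j))" .
  have "E0 d D \<noteq> 0"
    using D0 \<Lambda>_E0[of d D] rhom_zero[OF rhom_\<Lambda>] by metis
  then obtain w where w: "w \<in> Poly_Mapping.keys (E0 d D)"
    by (metis all_not_in_conv keys_eq_empty)
  define g0 where "g0 = Poly_Mapping.lookup (E0 d D) w"
  define e where "e j = Poly_Mapping.lookup (\<Psi> d (c2 j)) w" for j
  have g0_nz: "g0 \<noteq> 0" using w unfolding g0_def by (simp add: in_keys_iff)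
  have g0_in: "g0 \<in> PolyIn {..<d}" using E0_coeffs[of d D] unfolding g0_def coeffs_in_def by blast
  have e_in: "e j \<in> PolyIn {..<n}" if "j \<in> J" for j
    using \<Psi>_coeffs[OF dn c2_in[OF that]] unfolding e_def coeffs_in_def by blast
  have eqA: "g0 * f ^ k = (\<Sum>j\<in>J. e j * u j)"
    using arg_cong[OF eqC, of "\<lambda>q. Poly_Mapping.lookup q w"]
    by (simp add: lookup_mult_const lookup_sum g0_def e_def)
  define t :: "'a mpoly" where "t = Var n"
  define R :: "'a mpoly set" where "R = PolyIn {..n}"
  define G where "G = set hs \<union> {f * Var n - 1}"
  have t_in: "t \<in> R" unfolding t_def R_def by (rule PolyIn_Var) simp
  have sub1: "PolyIn {..<n} \<subseteq> R" unfolding R_def by (rule PolyIn_mono) auto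
  have sub2: "PolyIn {..<d} \<subseteq> R" unfolding R_def by (rule PolyIn_mono) (use dn in auto)
  have f_in: "f \<in> R" using sub1 f by (rule subsetD)
  have g0_inR: "g0 \<in> R" using sub2 g0_in by (rule subsetD)
  have H_sub: "H \<subseteq> gen_ideal R G"
    unfolding H_def G_def by (rule gi_mono[OF sub1]) auto
  have identity: "g0 = (- (g0 * (\<Sum>i<k. (f * t) ^ i))) * (f * t - 1) + (\<Sum>j\<in>J. (t ^ k * e j) * u j)"
  proof -
    have h1: "(f * t - 1) * (\<Sum>i<k. (f * t) ^ i) = (f * t) ^ k - 1"
      by (simp add: power_diff_1_eq)
    have h2: "(\<Sum>j\<in>J. (t ^ k * e j) * u j) = t ^ k * (g0 * f ^ k)"
      by (simp add: eqA sum_distrib_left mult.assoc)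
    have "(- (g0 * (\<Sum>i<k. (f * t) ^ i))) * (f * t - 1) = - g0 * ((f * t - 1) * (\<Sum>i<k. (f * t) ^ i))"
      by (simp add: algebra_simps)
    also have "\<dots> = g0 - g0 * f ^ k * t ^ k"
      unfolding h1 by (simp add: algebra_simps power_mult_distrib)
    finally show ?thesis using h2 by (simp add: algebra_simps)
  qed
  have "g0 \<in> gen_ideal R G"
  proof -
    have A: "- (g0 * (\<Sum>i<k. (f * t) ^ i)) \<in> R"
      unfolding R_def
      by (intro PolyIn_uminus PolyIn_mult PolyIn_sum PolyIn_power) (use g0_inR f_in t_in R_def in auto)
    have B: "f * t - 1 \<in> gen_ideal R G"
      by (rule gi_gen) (simp_all add: R_def G_def t_def)
    have C: "(\<Sum>j\<in>J. (t ^ k * e j) * u j) \<in> gen_ideal R G"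
    proof (rule gi_sum)
      fix j assume jJ: "j \<in> J"
      have "t ^ k * e j \<in> R" unfolding R_def
        by (intro PolyIn_mult PolyIn_power) (use t_in subsetD[OF sub1 e_in[OF jJ]] R_def in auto)
      moreover have "u j \<in> gen_ideal R G" using u[OF jJ] H_sub by auto
      ultimately show "t ^ k * e j * u j \<in> gen_ideal R G"
        unfolding R_def by (rule gi_PolyIn_mult)
    qed
    show ?thesis
      by (subst identity, intro gi_add C) (unfold R_def, rule gi_PolyIn_mult, use A R_def in simp, use B R_def in simp)
  qed
  then have "g0 \<in> gen_ideal (PolyIn {..n}) (set hs \<union> {f * Var n - 1}) \<inter> PolyIn {..<d}"
    using g0_in unfolding R_def G_def by simp
  then show ?thesis using g0_nz by auto
qed



definition jT :: "'a::field mpoly fract mpoly \<Rightarrow> 'a mpoly fract mpoly fract" where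
  "jT x = Fract x 1"

lemma rhom_jT: "rhom (jT :: 'a::field mpoly fract mpoly \<Rightarrow> _)"
  unfolding jT_def[abs_def] by (rule rhom_Fract1)

definition \<sigma>T :: "nat \<Rightarrow> nat \<Rightarrow> 'a::field mpoly fract mpoly \<Rightarrow> nat \<Rightarrow> 'a mpoly fract mpoly fract" where
  "\<sigma>T d n ef v = (if v = n then Fract 1 ef else jT (\<sigma>E d v))"

definition \<Theta> :: "nat \<Rightarrow> nat \<Rightarrow> 'a::field mpoly fract mpoly \<Rightarrow> 'a mpoly \<Rightarrow> 'a mpoly fract mpoly fract" where
  "\<Theta> d n ef = ev (jT \<circ> cE) (\<sigma>T d n ef)"

lemma rhom_jTcE: "rhom (jT \<circ> (cE :: 'a::field \<Rightarrow> _))"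
  by (intro rhom_comp rhom_jT rhom_cE)

lemma rhom_\<Theta>: "rhom (\<Theta> d n ef :: 'a::field mpoly \<Rightarrow> _)"
  unfolding \<Theta>_def by (intro rhom_ev rhom_jTcE)

lemma \<Theta>_emb:
  assumes "p \<in> PolyIn {..<n}"
  shows "\<Theta> d n ef p = jT (emb d (p :: 'a::field mpoly))"
proof -
  have "\<Theta> d n ef p = ev (jT \<circ> cE) (jT \<circ> \<sigma>E d) p"
    unfolding \<Theta>_def
  proof (rule ev_cong)
    fix m v assume "m \<in> Poly_Mapping.keys p" "v \<in> Poly_Mapping.keys m"
    then have "v < n" using assms unfolding PolyIn_def by auto
    then show "\<sigma>T d n ef v = (jT \<circ> \<sigma>E d) v" by (simp add: \<sigma>T_def)
  qed
  also have "\<dots> = jT (ev cE (\<sigma>E d) p)"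
    by (rule ev_comp[OF rhom_cE rhom_jT, symmetric])
  finally show ?thesis by (simp add: emb_ev)
qed

lemma emb_const:
  assumes "g \<in> PolyIn {..<d}"
  shows "emb d g = Poly_Mapping.single 0 (Fract (g :: 'a::field mpoly) 1)"
proof -
  define \<phi> :: "'a mpoly \<Rightarrow> 'a mpoly fract mpoly" where "\<phi> = (\<lambda>x. Poly_Mapping.single 0 x) \<circ> (\<lambda>a. Fract a 1)"
  have r\<phi>: "rhom \<phi>" unfolding \<phi>_def by (intro rhom_comp rhom_const rhom_Fract1)
  have "emb d g = ev cE (\<phi> \<circ> Var) g"
    unfolding emb_ev
  proof (rule ev_cong)
    fix m v assume "m \<in> Poly_Mapping.keys g" "v \<in> Poly_Mapping.keys m"
    then have "v < d" using assms unfolding PolyIn_def by auto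
    then show "\<sigma>E d v = (\<phi> \<circ> Var) v" by (simp add: \<sigma>E_def \<phi>_def)
  qed
  also have "cE = \<phi> \<circ> (\<lambda>a. Poly_Mapping.single 0 a)" by (auto simp: cE_def \<phi>_def)
  also have "ev (\<phi> \<circ> (\<lambda>a. Poly_Mapping.single 0 a)) (\<phi> \<circ> Var) g = \<phi> (ev (\<lambda>a. Poly_Mapping.single 0 a) Var g)"
    by (rule ev_comp[OF rhom_const r\<phi>, symmetric])
  finally show ?thesis by (simp add: ev_id \<phi>_def)
qed

lemma emb_PolyIn:
  assumes "p \<in> PolyIn {..<n}"
  shows "emb d (p :: 'a::field mpoly) \<in> PolyIn {d..<n}"
  unfolding emb_ev
proof (rule ev_PolyIn)
  fix m show "cE (Poly_Mapping.lookup p m) \<in> PolyIn {d..<n}" by (simp add: cE_def)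
next
  fix m v assume "m \<in> Poly_Mapping.keys p" "v \<in> Poly_Mapping.keys m"
  then have "v < n" using assms unfolding PolyIn_def by auto
  then show "(\<sigma>E d v :: 'a mpoly fract mpoly) \<in> PolyIn {d..<n}"
    by (auto simp: \<sigma>E_def intro: PolyIn_Var)
qed

lemma \<Theta>_Q:
  assumes ef: "ef \<noteq> 0" "ef \<in> PolyIn {d..<n}" and p: "p \<in> PolyIn {..n}"
  shows "\<exists>N q. q \<in> PolyIn {d..<n} \<and> \<Theta> d n ef (p :: 'a::field mpoly) * jT ef ^ N = jT q"
proof -
  define Q where "Q = {x. \<exists>N q. q \<in> PolyIn {d..<n} \<and> x * jT ef ^ N = jT q}"
  have "\<Theta> d n ef p \<in> Q"
    unfolding \<Theta>_def
  proof (rule ev_closed)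
    fix x y assume "x \<in> Q" "y \<in> Q"
    then obtain N1 q1 N2 q2 where 1: "q1 \<in> PolyIn {d..<n}" "x * jT ef ^ N1 = jT q1"
      and 2: "q2 \<in> PolyIn {d..<n}" "y * jT ef ^ N2 = jT q2" unfolding Q_def by blast
    have "(x + y) * jT ef ^ (N1 + N2) = jT (q1 * ef ^ N2 + q2 * ef ^ N1)"
      by (simp add: rhom_add[OF rhom_jT] rhom_mult[OF rhom_jT] rhom_power[OF rhom_jT] 1(2)[symmetric] 2(2)[symmetric] power_add algebra_simps)
    moreover have "q1 * ef ^ N2 + q2 * ef ^ N1 \<in> PolyIn {d..<n}"
      using 1(1) 2(1) ef(2) by (intro PolyIn_add PolyIn_mult PolyIn_power)
    ultimately show "x + y \<in> Q" unfolding Q_def by blast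
    have "(x * y) * jT ef ^ (N1 + N2) = jT (q1 * q2)"
      by (simp add: rhom_mult[OF rhom_jT] 1(2)[symmetric] 2(2)[symmetric] power_add algebra_simps)
    moreover have "q1 * q2 \<in> PolyIn {d..<n}"
      using 1(1) 2(1) by (intro PolyIn_mult)
    ultimately show "x * y \<in> Q" unfolding Q_def by blast
  next
    show "0 \<in> Q" unfolding Q_def by (rule CollectI, rule exI[of _ 0], rule exI[of _ 0]) (simp add: rhom_zero[OF rhom_jT])
  next
    show "1 \<in> Q" unfolding Q_def by (rule CollectI, rule exI[of _ 0], rule exI[of _ 1]) (simp add: rhom_one[OF rhom_jT])
  next
    fix m
    show "(jT \<circ> cE) (Poly_Mapping.lookup p m) \<in> Q" unfolding Q_def
      by (rule CollectI, rule exI[of _ 0], rule exI[of _ "cE (Poly_Mapping.lookup p m)"]) (simp add: cE_def)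
  next
    fix m v assume "m \<in> Poly_Mapping.keys p" "v \<in> Poly_Mapping.keys m"
    then have v: "v \<le> n" using p unfolding PolyIn_def by auto
    show "\<sigma>T d n ef v \<in> Q"
    proof (cases "v = n")
      case True
      have ee: "Fract ef ef = (1 :: 'a mpoly fract mpoly fract)"
      proof -
        have "Fract ef ef = Fract 1 (1 :: 'a mpoly fract mpoly)" using ef(1) by (simp add: eq_fract del: Fract11)
        then show ?thesis by simp
      qed
      have "Fract 1 ef * jT ef ^ 1 = jT 1"
        using ef(1) ee by (simp add: jT_def)
      then show ?thesis unfolding Q_def using True by (intro CollectI exI[of _ 1] exI[of _ 1]) (simp add: \<sigma>T_def)
    next
      case False
      then have "v < n" using v by simp
      then have "(\<sigma>E d v :: 'a mpoly fract mpoly) \<in> PolyIn {d..<n}"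
        by (auto simp: \<sigma>E_def intro: PolyIn_Var)
      then show ?thesis unfolding Q_def using False
        by (intro CollectI exI[of _ 0] exI[of _ "\<sigma>E d v"]) (simp add: \<sigma>T_def)
    qed
  qed
  then show ?thesis unfolding Q_def by simp
qed



lemma backward:
  fixes n d :: nat and hs :: "('a::field) mpoly list" and f :: "'a mpoly"
  assumes dn: "d \<le> n"
    and hs: "set hs \<subseteq> PolyIn {..<n}"
    and f: "f \<in> PolyIn {..<n}"
    and nz: "gen_ideal (PolyIn {..n}) (set hs \<union> {f * Var n - 1}) \<inter> PolyIn {..<d} \<noteq> {0}"
  shows "emb d f \<in> radical_in (PolyIn {d..<n})
            (gen_ideal (PolyIn {d..<n}) (emb d ` gen_ideal (PolyIn {..<n}) (set hs)))"
proof -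
  define H where "H = gen_ideal (PolyIn {..<n}) (set hs)"
  define G where "G = set hs \<union> {f * Var n - 1}"
  define ef where "ef = emb d f"
  have ef_in: "ef \<in> PolyIn {d..<n}" unfolding ef_def by (rule emb_PolyIn[OF f])
  have "0 \<in> gen_ideal (PolyIn {..n}) G \<inter> PolyIn {..<d}" by (simp add: gi_zero)
  then obtain g where gI: "g \<in> gen_ideal (PolyIn {..n}) G" and gd: "g \<in> PolyIn {..<d}" and g0: "g \<noteq> 0"
    using nz unfolding G_def by auto
  have H0: "0 \<in> H" unfolding H_def by (rule gi_zero)
  have "\<exists>k. ef ^ k \<in> gen_ideal (PolyIn {d..<n}) (emb d ` H)"
  proof (cases "f = 0")
    case True
    then have "ef ^ 1 = 0" by (simp add: ef_def emb_zero)
    then show ?thesis using gi_zero by metis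
  next
    case False
    then have ef0: "ef \<noteq> 0" unfolding ef_def by (simp add: emb_eq_zero)
    have "\<exists>I c gg. finite (I::nat set) \<and> (\<forall>i\<in>I. c i \<in> PolyIn {..n} \<and> gg i \<in> G) \<and> g = (\<Sum>i\<in>I. c i * gg i)"
      using gI unfolding gen_ideal_def by simp
    then obtain I c gg where I: "finite (I::nat set)" and cg: "\<forall>i\<in>I. c i \<in> PolyIn {..n} \<and> gg i \<in> G"
      and geq: "g = (\<Sum>i\<in>I. c i * gg i)" by (elim exE conjE) (rule that)
    have "\<forall>i\<in>I. \<exists>N q. q \<in> PolyIn {d..<n} \<and> \<Theta> d n ef (c i) * jT ef ^ N = jT q"
      using cg \<Theta>_Q[OF ef0 ef_in] by auto
    then obtain N q where Nq: "\<And>i. i \<in> I \<Longrightarrow> q i \<in> PolyIn {d..<n} \<and> \<Theta> d n ef (c i) * jT ef ^ N i = jT (q i)"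
      by metis
    define M where "M = (\<Sum>i\<in>I. N i)"
    define q' where "q' i = q i * ef ^ (M - N i)" for i
    have q'_in: "q' i \<in> PolyIn {d..<n}" if "i \<in> I" for i
      unfolding q'_def using Nq[OF that] ef_in by (intro PolyIn_mult PolyIn_power) auto
    have q'_eq: "\<Theta> d n ef (c i) * jT ef ^ M = jT (q' i)" if "i \<in> I" for i
    proof -
      have "N i \<le> M" unfolding M_def using I that by (intro member_le_sum) auto
      then have "jT ef ^ M = jT ef ^ N i * jT ef ^ (M - N i)"
        by (simp add: power_add[symmetric])
      then show ?thesis using Nq[OF that]
        by (simp add: q'_def rhom_mult[OF rhom_jT] rhom_power[OF rhom_jT] mult.assoc[symmetric])
    qed
    define E' where "E' i = (if gg i = f * Var n - 1 then 0 else emb d (gg i))" for i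
    have E'_eq: "\<Theta> d n ef (gg i) = jT (E' i)" if "i \<in> I" for i
    proof (cases "gg i = f * Var n - 1")
      case True
      have ee: "jT ef * Fract 1 ef = 1"
      proof -
        have "Fract ef ef = Fract 1 (1 :: 'a mpoly fract mpoly)" using ef0 by (simp add: eq_fract del: Fract11)
        then show ?thesis by (simp add: jT_def)
      qed
      have "\<Theta> d n ef (gg i) = \<Theta> d n ef f * \<Theta> d n ef (Var n) - 1"
        using True by (simp add: rhom_diff[OF rhom_\<Theta>] rhom_mult[OF rhom_\<Theta>] rhom_one[OF rhom_\<Theta>])
      also have "\<dots> = 0"
      proof -
        have "\<Theta> d n ef (Var n) = Fract 1 ef" by (simp add: \<Theta>_def ev_Var rhom_jTcE \<sigma>T_def)
        moreover have "\<Theta> d n ef f = jT ef" by (simp add: \<Theta>_emb[OF f] ef_def)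
        ultimately show ?thesis using ee by simp
      qed
      finally show ?thesis using True by (simp add: E'_def jT_def)
    next
      case False
      then have "gg i \<in> set hs" using cg that unfolding G_def by auto
      then have "gg i \<in> PolyIn {..<n}" using hs by auto
      then show ?thesis using False by (simp add: E'_def \<Theta>_emb)
    qed
    have E'_in: "E' i \<in> emb d ` H" if "i \<in> I" for i
    proof (cases "gg i = f * Var n - 1")
      case True
      have "emb d 0 \<in> emb d ` H" using H0 by (rule imageI)
    then show ?thesis using True by (simp add: E'_def emb_zero)
    next
      case False
      then have "gg i \<in> set hs" using cg that unfolding G_def by auto
      then have "gg i \<in> H" unfolding H_def by (intro gi_gen) simp_all
      then show ?thesis using False by (simp add: E'_def)
    qed
    have gd': "g \<in> PolyIn {..<n}" using gd PolyIn_mono[of "{..<d}" "{..<n}"] dn by auto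
    define \<gamma> where "\<gamma> = Fract g (1 :: 'a mpoly)"
    have \<gamma>0: "\<gamma> \<noteq> 0" unfolding \<gamma>_def using g0 by (simp add: Fract1_zero)
    have "jT (emb d g * ef ^ M) = \<Theta> d n ef g * jT ef ^ M"
      by (simp add: \<Theta>_emb[OF gd'] rhom_mult[OF rhom_jT] rhom_power[OF rhom_jT])
    also have "\<dots> = (\<Sum>i\<in>I. (\<Theta> d n ef (c i) * jT ef ^ M) * \<Theta> d n ef (gg i))"
      by (simp add: geq rhom_sum[OF rhom_\<Theta>] rhom_mult[OF rhom_\<Theta>] sum_distrib_right sum_distrib_left mult_ac)
    also have "\<dots> = (\<Sum>i\<in>I. jT (q' i) * jT (E' i))"
      by (rule sum.cong) (simp_all add: q'_eq E'_eq)
    also have "\<dots> = jT (\<Sum>i\<in>I. q' i * E' i)"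
      by (simp add: rhom_sum[OF rhom_jT] rhom_mult[OF rhom_jT])
    finally have eqS: "emb d g * ef ^ M = (\<Sum>i\<in>I. q' i * E' i)"
      unfolding jT_def by (simp add: Fract1_inj)
    have "ef ^ M = Poly_Mapping.single 0 (inverse \<gamma>) * (emb d g * ef ^ M)"
      using \<gamma>0 by (simp add: emb_const[OF gd] \<gamma>_def[symmetric] mult.assoc[symmetric] mult_single)
    also have "\<dots> = (\<Sum>i\<in>I. (Poly_Mapping.single 0 (inverse \<gamma>) * q' i) * E' i)"
      by (simp add: eqS sum_distrib_left mult.assoc)
    finally have "ef ^ M = (\<Sum>i\<in>I. (Poly_Mapping.single 0 (inverse \<gamma>) * q' i) * E' i)" .
    then have "ef ^ M \<in> gen_ideal (PolyIn {d..<n}) (emb d ` H)"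
      using I q'_in E'_in
      by (intro gen_idealI[where I=I and c="\<lambda>i. Poly_Mapping.single 0 (inverse \<gamma>) * q' i" and g=E'])
         (auto intro: PolyIn_mult)
    then show ?thesis by blast
  qed
  then show ?thesis using ef_in unfolding radical_in_def ef_def H_def by blast
qed


theorem lemma2:
  fixes n d :: nat and hs :: "('a::field) mpoly list" and f :: "'a mpoly"
  assumes "d \<le> n"
    and "set hs \<subseteq> PolyIn {..<n}"
    and "f \<in> PolyIn {..<n}"
    and indep: "gen_ideal (PolyIn {..<n}) (set hs) \<inter> PolyIn {..<d} = {0}"
    and maxsize: "\<forall>W \<subseteq> {..<n}. card W > d \<longrightarrow>
                    gen_ideal (PolyIn {..<n}) (set hs) \<inter> PolyIn W \<noteq> {0}"
  shows "emb d f \<in> radical_in (PolyIn {d..<n})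
            (gen_ideal (PolyIn {d..<n}) (emb d ` gen_ideal (PolyIn {..<n}) (set hs)))
     \<longleftrightarrow> gen_ideal (PolyIn {..n}) (set hs \<union> {f * Var n - 1}) \<inter> PolyIn {..<d} \<noteq> {0}"
proof
  assume "emb d f \<in> radical_in (PolyIn {d..<n})
            (gen_ideal (PolyIn {d..<n}) (emb d ` gen_ideal (PolyIn {..<n}) (set hs)))"
  then show "gen_ideal (PolyIn {..n}) (set hs \<union> {f * Var n - 1}) \<inter> PolyIn {..<d} \<noteq> {0}"
    by (rule forward[OF assms(1,2,3)])
next
  assume "gen_ideal (PolyIn {..n}) (set hs \<union> {f * Var n - 1}) \<inter> PolyIn {..<d} \<noteq> {0}"
  then show "emb d f \<in> radical_in (PolyIn {d..<n})
            (gen_ideal (PolyIn {d..<n}) (emb d ` gen_ideal (PolyIn {..<n}) (set hs)))"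
    by (rule backward[OF assms(1,2,3)])
qed

end
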